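(* Let $\mathcal{G}_n$ be the set of binary words $w=w_1\cdots w_{2n}$ with $n$ zeros and $n$ ones, and $\mathrm{da}(w)=|\{i\in[n]: w_i\neq w_{2n+1-i}\}|$. For integers $0\le k\le n$ with $n-k$ even, $$|\{w\in\mathcal{G}_n:\mathrm{da}(w)=k\}|=\binom{n}{k}\binom{n-k}{\frac{n-k}{2}}2^k,$$ and this number is $0$ if $n-k$ is odd.
   Context: $[n]=\{1,2,\dots,n\}$. *)

theory Defs
  imports Main
begin

text \<open>Binary words of length 2n with n zeros and n ones; letters are 0/1 naturals,
  and w_i (1-indexed) is w ! (i - 1).\<close>
definition G :: "nat \<Rightarrow> nat list set" where
  "G n = {w. length w = 2 * n \<and> set w \<subseteq> {0, 1}
             \<and> length (filter (\<lambda>x. x = 0) w) = n \<and> length (filter (\<lambda>x. x = 1) w) = n}"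

definition da :: "nat \<Rightarrow> nat list \<Rightarrow> nat" where
  "da n w = card {i \<in> {1..n}. w ! (i - 1) \<noteq> w ! (2 * n + 1 - i - 1)}"

end

theory Submission
  imports Defs
begin

definition PS :: "(nat\<times>nat) set" where "PS = {(0,0),(1,1),(0,1),(1,0)}"

definition P :: "nat \<Rightarrow> nat \<Rightarrow> nat \<Rightarrow> (nat\<times>nat) list set" where
"P n a k = {ps. length ps = n \<and> set ps \<subseteq> PS \<and> length (filter (\<lambda>p. p=(0,0)) ps) = a
   \<and> length (filter (\<lambda>p. fst p \<noteq> snd p) ps) = k}"

lemma finP: "finite (P n a k)"
proof -
  have "P n a k \<subseteq> {ps. set ps \<subseteq> PS \<and> length ps = n}" unfolding P_def by auto
  moreover have "finite {ps. set ps \<subseteq> PS \<and> length ps = n}"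
    by (rule finite_lists_length_eq) (simp add: PS_def)
  ultimately show ?thesis by (rule finite_subset)
qed

lemma splitP: "P (Suc n) a k = {ps \<in> P (Suc n) a k. hd ps = (0,0)} \<union> {ps \<in> P (Suc n) a k. hd ps = (1,1)}
   \<union> {ps \<in> P (Suc n) a k. hd ps = (0,1)} \<union> {ps \<in> P (Suc n) a k. hd ps = (1,0)}"
  unfolding P_def PS_def by (auto simp: length_Suc_conv)

lemma P00: "{ps \<in> P (Suc n) a k. hd ps = (0,0)} = (if a > 0 then Cons (0,0) ` P n (a-1) k else {})"
  unfolding P_def PS_def by (auto simp: length_Suc_conv image_def)

lemma P11: "{ps \<in> P (Suc n) a k. hd ps = (1,1)} = Cons (1,1) ` P n a k"
  unfolding P_def PS_def by (auto simp: length_Suc_conv image_def)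

lemma P01: "{ps \<in> P (Suc n) a k. hd ps = (0,1)} = (if k > 0 then Cons (0,1) ` P n a (k-1) else {})"
  unfolding P_def PS_def by (auto simp: length_Suc_conv image_def)

lemma P10: "{ps \<in> P (Suc n) a k. hd ps = (1,0)} = (if k > 0 then Cons (1,0) ` P n a (k-1) else {})"
  unfolding P_def PS_def by (auto simp: length_Suc_conv image_def)

lemma cardP_rec: "card (P (Suc n) a k) = (if a>0 then card(P n (a-1) k) else 0) + card(P n a k)
   + (if k>0 then 2*card(P n a (k-1)) else 0)"
proof -
  have c: "card (Cons x ` A) = card A" for x :: "nat\<times>nat" and A
    by (rule card_image) (simp add: inj_on_def)
  have f: "finite {ps \<in> P (Suc n) a k. Q ps}" for Q using finP by simp
  define A where "A = {ps \<in> P (Suc n) a k. hd ps = (0,0)}"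
  define B where "B = {ps \<in> P (Suc n) a k. hd ps = (1,1)}"
  define C where "C = {ps \<in> P (Suc n) a k. hd ps = (0,1)}"
  define D where "D = {ps \<in> P (Suc n) a k. hd ps = (1,0)}"
  have "card (P (Suc n) a k) = card (A \<union> B \<union> C \<union> D)"
    using splitP A_def B_def C_def D_def by simp
  also have "\<dots> = card A + card B + card C + card D"
    unfolding A_def B_def C_def D_def
    by (subst card_Un_disjoint, use f in auto)+
  also have "\<dots> = (if a>0 then card(P n (a-1) k) else 0) + card(P n a k)
   + (if k>0 then 2*card(P n a (k-1)) else 0)"
    unfolding A_def B_def C_def D_def P00 P11 P01 P10 by (simp add: c)
  finally show ?thesis .
qed

lemma P0: "P 0 a k = (if a = 0 \<and> k = 0 then {[]} else {})"
  unfolding P_def by auto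

lemma cardP: "card (P n a k) = (n choose k) * 2^k * ((n-k) choose a)"
proof (induction n arbitrary: a k)
  case 0
  then show ?case by (simp add: P0)
next
  case (Suc n)
  show ?case
  proof (cases a)
    case 0
    then show ?thesis
    proof (cases k)
      case 0
      then show ?thesis using \<open>a = 0\<close> by (simp add: cardP_rec Suc.IH algebra_simps)
    next
      case (Suc k')
      then show ?thesis using \<open>a = 0\<close> by (simp add: cardP_rec Suc.IH algebra_simps)
    qed
  next
    case (Suc a')
    then show ?thesis
    proof (cases k)
      case 0
      then show ?thesis using \<open>a = Suc a'\<close> by (simp add: cardP_rec Suc.IH algebra_simps)
    next
      case (Suc k')
      show ?thesis
      proof (cases "k' < n")
        case True
        then obtain m where m: "n - k' = Suc m" "n - Suc k' = m" by (metis Suc_diff_Suc)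
        show ?thesis using \<open>a = Suc a'\<close> Suc m
          by (simp add: cardP_rec Suc.IH algebra_simps)
      next
        case False
        show ?thesis using \<open>a = Suc a'\<close> Suc False
          by (simp add: cardP_rec Suc.IH algebra_simps)
      qed
    qed
  qed
qed


definition psi :: "(nat\<times>nat) list \<Rightarrow> nat list" where
  "psi ps = map fst ps @ rev (map snd ps)"

lemma filt_psi: "length (filter Q (psi ps)) = length (filter Q (map fst ps)) + length (filter Q (map snd ps))"
  unfolding psi_def by (simp flip: rev_filter)

lemma cnt0: "set ps \<subseteq> PS \<Longrightarrow> length (filter (\<lambda>x. x = 0) (map fst ps)) + length (filter (\<lambda>x. x = 0) (map snd ps))
   = 2 * length (filter (\<lambda>p. p=(0,0)) ps) + length (filter (\<lambda>p. fst p \<noteq> snd p) ps)"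
  by (induction ps) (auto simp: PS_def)

lemma cnt1: "set ps \<subseteq> PS \<Longrightarrow> length (filter (\<lambda>x. x = 1) (map fst ps)) + length (filter (\<lambda>x. x = 1) (map snd ps))
   = 2 * (length ps - length (filter (\<lambda>p. p=(0,0)) ps) - length (filter (\<lambda>p. fst p \<noteq> snd p) ps)) + length (filter (\<lambda>p. fst p \<noteq> snd p) ps)"
proof (induction ps)
  case Nil then show ?case by simp
next
  case (Cons p ps)
  have le: "length (filter (\<lambda>p. p=(0,0)) ps) + length (filter (\<lambda>p. fst p \<noteq> snd p) ps) \<le> length ps"
  proof -
    have "length (filter (\<lambda>p. p=(0,0)) ps) + length (filter (\<lambda>p. fst p \<noteq> snd p) ps)
       = length (filter (\<lambda>p. p=(0,0) \<or> fst p \<noteq> snd p) ps)"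
      by (induction ps) auto
    also have "\<dots> \<le> length ps" by (rule length_filter_le)
    finally show ?thesis .
  qed
  show ?case using Cons le by (auto simp: PS_def)
qed

lemma da_psi: "length ps = n \<Longrightarrow> da n (psi ps) = length (filter (\<lambda>p. fst p \<noteq> snd p) ps)"
proof -
  assume len: "length ps = n"
  have nth1: "psi ps ! (i - 1) = fst (ps ! (i-1))" if "i \<in> {1..n}" for i
    using that len unfolding psi_def by (auto simp: nth_append)
  have nth2: "psi ps ! (2 * n + 1 - i - 1) = snd (ps ! (i-1))" if "i \<in> {1..n}" for i
    using that len unfolding psi_def by (auto simp: nth_append rev_nth)
  have "{i \<in> {1..n}. psi ps ! (i - 1) \<noteq> psi ps ! (2 * n + 1 - i - 1)}
     = Suc ` {j. j < length ps \<and> fst (ps ! j) \<noteq> snd (ps ! j)}"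
  proof
    show "{i \<in> {1..n}. psi ps ! (i - 1) \<noteq> psi ps ! (2 * n + 1 - i - 1)}
     \<subseteq> Suc ` {j. j < length ps \<and> fst (ps ! j) \<noteq> snd (ps ! j)}"
    proof
      fix i assume i: "i \<in> {i \<in> {1..n}. psi ps ! (i - 1) \<noteq> psi ps ! (2 * n + 1 - i - 1)}"
      then have "i \<in> {1..n}" by simp
      then have "i = Suc (i-1)" "i - 1 < length ps" using len by auto
      moreover have "fst (ps ! (i-1)) \<noteq> snd (ps ! (i-1))" using i nth1 nth2 by auto
      ultimately show "i \<in> Suc ` {j. j < length ps \<and> fst (ps ! j) \<noteq> snd (ps ! j)}"
        by (metis (mono_tags, lifting) image_eqI mem_Collect_eq)
    qed
  next
    show "Suc ` {j. j < length ps \<and> fst (ps ! j) \<noteq> snd (ps ! j)} \<subseteq>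
       {i \<in> {1..n}. psi ps ! (i - 1) \<noteq> psi ps ! (2 * n + 1 - i - 1)}"
    proof
      fix i assume "i \<in> Suc ` {j. j < length ps \<and> fst (ps ! j) \<noteq> snd (ps ! j)}"
      then obtain j where j: "i = Suc j" "j < length ps" "fst (ps ! j) \<noteq> snd (ps ! j)" by auto
      then have "i \<in> {1..n}" using len by auto
      moreover have "psi ps ! (i - 1) \<noteq> psi ps ! (2 * n + 1 - i - 1)"
        using nth1[OF \<open>i \<in> {1..n}\<close>] nth2[OF \<open>i \<in> {1..n}\<close>] j by simp
      ultimately show "i \<in> {i \<in> {1..n}. psi ps ! (i - 1) \<noteq> psi ps ! (2 * n + 1 - i - 1)}" by simp
    qed
  qed
  then show ?thesis unfolding da_def by (simp add: card_image length_filter_conv_card)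
qed

lemma psi_inj: "inj_on psi {ps. length ps = n}"
proof (rule inj_onI)
  fix ps qs assume "ps \<in> {ps. length ps = n}" "qs \<in> {ps. length ps = n}" "psi ps = psi qs"
  then have "map fst ps = map fst qs" "map snd ps = map snd qs"
    unfolding psi_def by auto
  then show "ps = qs" by (metis zip_map_fst_snd)
qed

lemma G_psi: "w \<in> G n \<Longrightarrow> \<exists>ps. w = psi ps \<and> length ps = n \<and> set ps \<subseteq> PS"
proof -
  assume w: "w \<in> G n"
  define ps where "ps = zip (take n w) (rev (drop n w))"
  have lw: "length w = 2*n" and sw: "set w \<subseteq> {0,1}" using w unfolding G_def by auto
  have lp: "length ps = n" using lw unfolding ps_def by simp
  have mf: "map fst ps = take n w" and ms: "map snd ps = rev (drop n w)" using lw unfolding ps_def by auto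
  then have "psi ps = w" unfolding psi_def by simp
  moreover have "set ps \<subseteq> PS"
  proof
    fix p assume "p \<in> set ps"
    then have "fst p \<in> set (map fst ps)" "snd p \<in> set (map snd ps)" by auto
    then have "fst p \<in> set w" "snd p \<in> set w" unfolding mf ms
      by (auto dest: in_set_takeD in_set_dropD)
    then show "p \<in> PS" using sw unfolding PS_def by (cases p) auto
  qed
  ultimately show ?thesis using lp by blast
qed

lemma psi_G: "length ps = n \<Longrightarrow> set ps \<subseteq> PS \<Longrightarrow> psi ps \<in> G n \<longleftrightarrow>
   2 * length (filter (\<lambda>p. p=(0,0)) ps) + length (filter (\<lambda>p. fst p \<noteq> snd p) ps) = n"
proof -
  assume l: "length ps = n" and s: "set ps \<subseteq> PS"
  have a: "length (psi ps) = 2 * n" using l by (simp add: psi_def)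
  have b: "set (psi ps) \<subseteq> {0,1}" using s unfolding psi_def PS_def by auto
  have "length (filter (\<lambda>p. p=(0,0)) ps) + length (filter (\<lambda>p. fst p \<noteq> snd p) ps) \<le> length ps"
  proof -
    have "length (filter (\<lambda>p. p=(0,0)) ps) + length (filter (\<lambda>p. fst p \<noteq> snd p) ps)
       = length (filter (\<lambda>p. p=(0,0) \<or> fst p \<noteq> snd p) ps)"
      by (induction ps) auto
    also have "\<dots> \<le> length ps" by (rule length_filter_le)
    finally show ?thesis .
  qed
  then show ?thesis unfolding G_def using a b cnt0[OF s] cnt1[OF s] filt_psi[of _ ps] l
    by auto
qed


lemma set_eq: "{w \<in> G n. da n w = k} = psi ` {ps. length ps = n \<and> set ps \<subseteq> PS \<and>
   2 * length (filter (\<lambda>p. p=(0,0)) ps) + length (filter (\<lambda>p. fst p \<noteq> snd p) ps) = n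
   \<and> length (filter (\<lambda>p. fst p \<noteq> snd p) ps) = k}" (is "?L = psi ` ?R")
proof
  show "?L \<subseteq> psi ` ?R"
  proof
    fix w assume w: "w \<in> ?L"
    then obtain ps where ps: "w = psi ps" "length ps = n" "set ps \<subseteq> PS" using G_psi by blast
    then show "w \<in> psi ` ?R" using w psi_G[OF ps(2,3)] da_psi[OF ps(2)] by auto
  qed
next
  show "psi ` ?R \<subseteq> ?L" using psi_G da_psi by auto
qed

theorem mainTheorem7:
  fixes n k :: nat
  assumes "k \<le> n"
  shows "(even (n - k) \<longrightarrow>
            card {w \<in> G n. da n w = k} = (n choose k) * ((n - k) choose ((n - k) div 2)) * 2 ^ k)
       \<and> (odd (n - k) \<longrightarrow> card {w \<in> G n. da n w = k} = 0)"
proof (intro conjI impI)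
  assume e: "even (n - k)"
  define a where "a = (n - k) div 2"
  have "{ps. length ps = n \<and> set ps \<subseteq> PS \<and>
   2 * length (filter (\<lambda>p. p=(0,0)) ps) + length (filter (\<lambda>p. fst p \<noteq> snd p) ps) = n
   \<and> length (filter (\<lambda>p. fst p \<noteq> snd p) ps) = k} = P n a k"
    unfolding P_def a_def using e assms by auto
  then have "card {w \<in> G n. da n w = k} = card (psi ` P n a k)" by (simp add: set_eq)
  also have "\<dots> = card (P n a k)"
    by (rule card_image, rule inj_on_subset[OF psi_inj[of n]]) (auto simp: P_def)
  finally show "card {w \<in> G n. da n w = k} = (n choose k) * ((n - k) choose ((n - k) div 2)) * 2 ^ k"
    by (simp add: cardP a_def)
next
  assume o: "odd (n - k)"
  have "{ps. length ps = n \<and> set ps \<subseteq> PS \<and>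
   2 * length (filter (\<lambda>p. p=(0,0)) ps) + length (filter (\<lambda>p. fst p \<noteq> snd p) ps) = n
   \<and> length (filter (\<lambda>p. fst p \<noteq> snd p) ps) = k} = {}" (is "?R = {}")
    using o by auto
  then show "card {w \<in> G n. da n w = k} = 0" unfolding set_eq by (simp only: image_empty card.empty)
qed

end
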